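(* Let $N\geq 2$ and let $P_N(z)=z^N+\sum_{m=1}^{N} c_m z^{N-m}=\prod_{n=1}^{N}(z-x_n)$ be a monic polynomial with complex coefficients $c_1,\dots,c_N$ and zeros $x_1,\dots,x_N$. Choose complex numbers $y_1(0),\dots,y_N(0)$, pairwise distinct, and define $$\gamma_m(0)=(-1)^m\sum_{N\geq n_1>n_2>\dots>n_m\geq 1} y_{n_1}(0)\,y_{n_2}(0)\cdots y_{n_m}(0),\qquad m=1,\dots,N,$$ so that $z^N+\sum_{m=1}^N\gamma_m(0)z^{N-m}=\prod_{n=1}^N(z-y_n(0))$. Let $y_1(t),\dots,y_N(t)$, $t$ real, be the solution with these initial values of the system $$\dot y_n(t)=-\Big\{\prod_{\ell=1,\ \ell\neq n}^{N}\big[y_n(t)-y_\ell(t)\big]^{-1}\Big\}\sum_{m=1}^{N}\big[c_m-\gamma_m(0)\big]\,\big[y_n(t)\big]^{N-m},\qquad n=1,\dots,N,$$ and suppose this solution exists on the whole interval $0\leq t\leq 1$ with $y_n(t)\neq y_\ell(t)$ for all $n\neq \ell$ and all $t\in[0,1]$. Then $x_n=y_n(1)$ for $n=1,\dots,N$ (as unordered sets, i.e. up to relabelling, $\{y_1(1),\dots,y_N(1)\}$ is the set of zeros of $P_N$ counted with multiplicity).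
   Context: A superimposed dot denotes differentiation with respect to the real variable $t$. The zeros of a polynomial are regarded as an unordered set. *)

theory Defs
  imports "HOL-Analysis.Analysis"
begin

definition gamma_coeff :: "nat \<Rightarrow> (nat \<Rightarrow> complex) \<Rightarrow> nat \<Rightarrow> complex" where
  "gamma_coeff N y0 m =
     (-1) ^ m * (\<Sum>S\<in>{S. S \<subseteq> {1..N} \<and> card S = m}. \<Prod>n\<in>S. y0 n)"

end

theory Submission
  imports Defs "HOL-Computational_Algebra.Polynomial"
begin

lemma lagrange:
  fixes x :: "nat \<Rightarrow> complex" and a :: "nat \<Rightarrow> complex"
  assumes fin: "finite A" and inj: "inj_on x A" and cardA: "card A = N"
  shows "(\<Sum>n\<in>A. (\<Prod>l\<in>A-{n}. inverse (x n - x l)) * (\<Sum>m=1..N. a m * (x n)^(N-m))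
            * (\<Prod>l\<in>A-{n}. (z - x l))) = (\<Sum>m=1..N. a m * z^(N-m))"
proof -
  define D where "D w = (\<Sum>m=1..N. a m * w^(N-m))" for w
  define p where "p = (\<Sum>n\<in>A. smult ((\<Prod>l\<in>A-{n}. inverse (x n - x l)) * D (x n))
                       (\<Prod>l\<in>A-{n}. [:- x l, 1:])) - (\<Sum>m=1..N. monom (a m) (N-m))"
  have evalp: "poly p w = (\<Sum>n\<in>A. (\<Prod>l\<in>A-{n}. inverse (x n - x l)) * D (x n)
            * (\<Prod>l\<in>A-{n}. (w - x l))) - D w" for w
    by (simp add: p_def poly_sum poly_prod D_def poly_monom)
  show ?thesis
  proof (cases "N = 0")
    case True
    then have "A = {}" using cardA fin by simp
    then show ?thesis using True by simp
  next
    case False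
    have degp: "degree p \<le> N - 1"
      unfolding p_def
    proof (intro degree_diff_le degree_sum_le fin)
      fix n assume n: "n \<in> A"
      have "degree (\<Prod>l\<in>A-{n}. [:- x l, 1:]) \<le> (\<Sum>l\<in>A-{n}. 1)"
        using degree_prod_sum_le[of "A-{n}" "\<lambda>l. [:- x l, 1:]"] fin by simp
      also have "\<dots> = N - 1" using n cardA fin by simp
      finally show "degree (smult ((\<Prod>l\<in>A-{n}. inverse (x n - x l)) * D (x n))
                       (\<Prod>l\<in>A-{n}. [:- x l, 1:])) \<le> N - 1"
        using degree_smult_le order_trans by blast
    next
      fix m assume "m \<in> {1..N}"
      then show "degree (monom (a m) (N - m)) \<le> N - 1"
        using degree_monom_le[of "a m" "N-m"] by auto
    qed auto
    have roots: "poly p (x k) = 0" if k: "k \<in> A" for k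
    proof -
      have "(\<Sum>n\<in>A. (\<Prod>l\<in>A-{n}. inverse (x n - x l)) * D (x n) * (\<Prod>l\<in>A-{n}. (x k - x l)))
          = (\<Prod>l\<in>A-{k}. inverse (x k - x l)) * D (x k) * (\<Prod>l\<in>A-{k}. (x k - x l))
            + (\<Sum>n\<in>A-{k}. (\<Prod>l\<in>A-{n}. inverse (x n - x l)) * D (x n) * (\<Prod>l\<in>A-{n}. (x k - x l)))"
        using sum.remove[OF fin k] by simp
      also have "(\<Sum>n\<in>A-{k}. (\<Prod>l\<in>A-{n}. inverse (x n - x l)) * D (x n) * (\<Prod>l\<in>A-{n}. (x k - x l))) = 0"
      proof (intro sum.neutral ballI)
        fix n assume "n \<in> A - {k}"
        then have "k \<in> A - {n}" using k by auto
        then have "(\<Prod>l\<in>A-{n}. (x k - x l)) = 0" using fin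
          by (intro prod_zero) auto
        then show "(\<Prod>l\<in>A-{n}. inverse (x n - x l)) * D (x n) * (\<Prod>l\<in>A-{n}. (x k - x l)) = 0" by simp
      qed
      also have "(\<Prod>l\<in>A-{k}. (x k - x l)) \<noteq> 0"
        using fin inj k by (auto simp: inj_on_def)
      then have "(\<Prod>l\<in>A-{k}. inverse (x k - x l)) * D (x k) * (\<Prod>l\<in>A-{k}. (x k - x l)) = D (x k)"
        using prod_inversef[of "\<lambda>l. x k - x l" "A-{k}"] by (simp add: o_def)
      finally show ?thesis using evalp by simp
    qed
    have "p = 0"
    proof (rule ccontr)
      assume "p \<noteq> 0"
      then have "card {w. poly p w = 0} \<le> N - 1"
        using card_poly_roots_bound degp order_trans by blast
      moreover have "x ` A \<subseteq> {w. poly p w = 0}" using roots by auto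
      then have "card (x ` A) \<le> card {w. poly p w = 0}"
        using poly_roots_finite[OF \<open>p \<noteq> 0\<close>] card_mono by blast
      moreover have "card (x ` A) = N" using card_image[OF inj] cardA by simp
      ultimately show False using False by simp
    qed
    then show ?thesis using evalp[of z] by (simp add: D_def)
  qed
qed

lemma vieta:
  fixes y :: "nat \<Rightarrow> complex"
  shows "(\<Prod>n=1..N. (z - y n)) = z ^ N + (\<Sum>m=1..N. gamma_coeff N y m * z ^ (N - m))"
proof -
  let ?A = "{1..N::nat}"
  have "(\<Prod>n\<in>?A. (z - y n)) = (\<Prod>n\<in>?A. (- y n) + z)" by simp
  also have "\<dots> = (\<Sum>X\<in>Pow ?A. (\<Prod>n\<in>X. - y n) * (\<Prod>n\<in>?A-X. z))"
    by (rule prod_add) simp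
  also have "\<dots> = (\<Sum>X\<in>Pow ?A. (-1)^card X * (\<Prod>n\<in>X. y n) * z ^ (N - card X))"
  proof (intro sum.cong refl)
    fix X assume X: "X \<in> Pow ?A"
    then have fX: "finite X" by (auto intro: finite_subset)
    have "card (?A - X) = N - card X" using X by (simp add: card_Diff_subset fX)
    then show "(\<Prod>n\<in>X. - y n) * (\<Prod>n\<in>?A-X. z) = (-1)^card X * (\<Prod>n\<in>X. y n) * z ^ (N - card X)"
      by (simp add: prod_uminus)
  qed
  also have "\<dots> = (\<Sum>m\<in>{0..N}. \<Sum>X\<in>{X. X \<in> Pow ?A \<and> card X = m}. (-1)^card X * (\<Prod>n\<in>X. y n) * z ^ (N - card X))"
    by (rule sum.group[symmetric]) (auto intro: card_mono[of ?A, simplified])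
  also have "\<dots> = (\<Sum>m\<in>{0..N}. gamma_coeff N y m * z ^ (N - m))"
  proof (intro sum.cong refl)
    fix m
    have "{X. X \<in> Pow ?A \<and> card X = m} = {S. S \<subseteq> ?A \<and> card S = m}" by auto
    then show "(\<Sum>X\<in>{X. X \<in> Pow ?A \<and> card X = m}. (-1)^card X * (\<Prod>n\<in>X. y n) * z ^ (N - card X))
       = gamma_coeff N y m * z ^ (N - m)"
      by (simp add: gamma_coeff_def sum_distrib_left sum_distrib_right mult.assoc)
  qed
  also have "\<dots> = gamma_coeff N y 0 * z ^ N + (\<Sum>m=1..N. gamma_coeff N y m * z ^ (N - m))"
    by (simp add: sum.atLeast_Suc_atMost)
  also have "gamma_coeff N y 0 = 1"
  proof -
    have "{S. S \<subseteq> ?A \<and> card S = 0} = {{}}" by (force simp: card_eq_0_iff dest: finite_subset[OF _ finite_atLeastAtMost])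
    then show ?thesis by (simp add: gamma_coeff_def)
  qed
  finally show ?thesis by simp
qed

theorem mainTheorem1:
  fixes N :: nat
    and c :: "nat \<Rightarrow> complex"
    and y :: "nat \<Rightarrow> real \<Rightarrow> complex"
  assumes N2: "N \<ge> 2"
    and init_distinct: "\<And>n l. n \<in> {1..N} \<Longrightarrow> l \<in> {1..N} \<Longrightarrow> n \<noteq> l \<Longrightarrow> y n 0 \<noteq> y l 0"
    and ode: "\<And>n t. n \<in> {1..N} \<Longrightarrow> t \<in> {0..1} \<Longrightarrow>
       (y n has_vector_derivative
          (- (\<Prod>l\<in>{1..N} - {n}. inverse (y n t - y l t))
             * (\<Sum>m=1..N. (c m - gamma_coeff N (\<lambda>k. y k 0) m) * (y n t) ^ (N - m))))
       (at t within {0..1})"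
    and distinct: "\<And>n l t. n \<in> {1..N} \<Longrightarrow> l \<in> {1..N} \<Longrightarrow> n \<noteq> l \<Longrightarrow> t \<in> {0..1}
       \<Longrightarrow> y n t \<noteq> y l t"
  shows "\<forall>z::complex. z ^ N + (\<Sum>m=1..N. c m * z ^ (N - m)) = (\<Prod>n=1..N. (z - y n 1))"
proof
  fix z :: complex
  define A where "A = {1..N}"
  define a where "a m = c m - gamma_coeff N (\<lambda>k. y k 0) m" for m
  define D where "D w = (\<Sum>m=1..N. a m * w^(N-m))" for w
  define y' where "y' n t = - (\<Prod>l\<in>A - {n}. inverse (y n t - y l t)) * D (y n t)" for n t
  define F where "F t = (\<Prod>n\<in>A. (z - y n t)) - t *\<^sub>R D z" for t
  have fin: "finite A" and cardA: "card A = N" by (auto simp: A_def)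
  have der: "(F has_derivative (\<lambda>h. 0)) (at t within {0..1})" if t: "t \<in> {0..1}" for t
  proof -
    have d1: "\<And>n. n \<in> A \<Longrightarrow> ((\<lambda>t. z - y n t) has_derivative (\<lambda>h. h *\<^sub>R (- y' n t))) (at t within {0..1})"
      using ode t unfolding has_vector_derivative_def y'_def D_def a_def A_def
      by (auto intro!: derivative_eq_intros)
    have "((\<lambda>t. \<Prod>n\<in>A. (z - y n t)) has_derivative
        (\<lambda>h. \<Sum>n\<in>A. h *\<^sub>R (- y' n t) * (\<Prod>l\<in>A-{n}. (z - y l t)))) (at t within {0..1})"
      by (rule has_derivative_prod[OF d1])
    moreover have "(\<lambda>h. \<Sum>n\<in>A. h *\<^sub>R (- y' n t) * (\<Prod>l\<in>A-{n}. (z - y l t)))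
        = (\<lambda>h. h *\<^sub>R (\<Sum>n\<in>A. (- y' n t) * (\<Prod>l\<in>A-{n}. (z - y l t))))"
      by (simp add: scaleR_sum_right)
    moreover have "(\<Sum>n\<in>A. (- y' n t) * (\<Prod>l\<in>A-{n}. (z - y l t))) = D z"
    proof -
      have inj: "inj_on (\<lambda>n. y n t) A" unfolding inj_on_def A_def using distinct t by blast
      show ?thesis using lagrange[OF fin inj cardA, of a z]
        by (simp add: y'_def D_def)
    qed
    ultimately have "((\<lambda>t. \<Prod>n\<in>A. (z - y n t)) has_derivative (\<lambda>h. h *\<^sub>R D z)) (at t within {0..1})"
      by simp
    moreover have "((\<lambda>t. t *\<^sub>R D z) has_derivative (\<lambda>h. h *\<^sub>R D z)) (at t within {0..1})"
      by (rule bounded_linear.has_derivative[OF bounded_linear_scaleR_left has_derivative_ident])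
    ultimately have "(F has_derivative (\<lambda>h. h *\<^sub>R D z - h *\<^sub>R D z)) (at t within {0..1})"
      unfolding F_def by (rule has_derivative_diff)
    then show ?thesis by simp
  qed
  obtain k where "\<forall>t\<in>{0..1}. F t = k"
    using has_derivative_zero_constant[of "{0..1::real}" F] der by auto
  then have "F 1 = F 0" by simp
  then have "(\<Prod>n\<in>A. (z - y n 1)) = (\<Prod>n\<in>A. (z - y n 0)) + D z"
    unfolding F_def by (simp add: algebra_simps)
  also have "(\<Prod>n\<in>A. (z - y n 0)) = z ^ N + (\<Sum>m=1..N. gamma_coeff N (\<lambda>k. y k 0) m * z ^ (N - m))"
    unfolding A_def by (rule vieta)
  finally show "z ^ N + (\<Sum>m=1..N. c m * z ^ (N - m)) = (\<Prod>n=1..N. (z - y n 1))"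
    by (simp add: A_def D_def a_def algebra_simps sum.distrib[symmetric] sum_subtractf[symmetric])
qed

end
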